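(* Let $\mathcal{I}\subseteq\mathcal{M}_m$ be decreasing, $f\in\mathcal{M}_m\setminus\mathcal{I}$, $h\mid f$ with $\operatorname{ind}(f/h)=\{i_1<\dots<i_\mu\}$. If $|J^{\mathcal{I}}_f(i_j)|>j-1$ for all $j\in\{1,\dots,\mu\}$, then $$\Bigl|\mathrm{LTA}(m,2)^{f,\mathcal{I}}_f\cdot\tfrac fh\Bigr|=2^{\deg(f/h)}\prod_{j=1}^{\deg(f/h)}\Bigl(2^{|J^{\mathcal{I}}_f(i_j)|}-2^{j-1}\Bigr).$$
   Context: $\mathcal{M}_m$: square-free monomials in $x_0,\dots,x_{m-1}$ over $\mathbb{F}_2$; $\operatorname{ind}(u)$ the variable indices of $u$, $\deg u=|\operatorname{ind} u|$; $x_jf/x_i$ denotes $f$ with $x_i$ replaced by $x_j$. Decreasing: for equal-degree monomials with increasing indices, $u\preceq_{sh}v$ iff componentwise $\le$; $u\preceq v$ iff $u\preceq_{sh}v^*\mid v$ for some $v^*$; $\mathcal{I}$ decreasing if $f\in\mathcal{I}$, $g\preceq f\Rightarrow g\in\mathcal{I}$. $J_f^{\mathcal{I}}(i)=\{j\in[0,i): j\notin\operatorname{ind}(f),\ x_jf/x_i\in\mathcal{I}\}$. $\mathrm{LTA}(m,2)$: pairs $(\mathbf{B},\varepsilon)$, $\mathbf{B}=(b_{i,j})$ binary lower unitriangular $m\times m$, $\varepsilon\in\mathbb{F}_2^m$, acting on a monomial $u$ by $x_i\mapsto x_i+\sum_{j<i}b_{i,j}x_j+\varepsilon_i$, $i\in\operatorname{ind}u$.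 $\mathrm{LTA}(m,2)_f$: subgroup with $\varepsilon_i=0$ for $i\notin\operatorname{ind} f$, $b_{i,j}=0$ if $i\notin\operatorname{ind}f$ or $j\in\operatorname{ind}f$. $\mathrm{LTA}(m,2)^{f,\mathcal{I}}_f\cdot\frac fh$ is the set of polynomials $(\mathbf{B},\varepsilon)\cdot\frac fh$ with $(\mathbf{B},\varepsilon)\in\mathrm{LTA}(m,2)_f$ such that $b_{i,j}=0$ for $i\in\operatorname{ind}(f/h)$, $j<i$, $j\notin J^{\mathcal{I}}_f(i)$, and the submatrix of $\mathbf{B}$ with rows $\operatorname{ind}(f/h)$ and columns $J^{\mathcal{I}}_f(i_\mu)$ has rank $\mu$. *)

theory Defs
  imports Main
begin

text \<open>Square-free monomials in x_0..x_{m-1} are represented by their index sets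
  ind(u), i.e. finite subsets of {0..<m}.  Polynomials over F_2 are represented
  by their evaluation functions (F_2^m -> F_2), with F_2 = bool, + = xor, * = and.\<close>

definition monomials :: "nat \<Rightarrow> nat set set" where
  "monomials m = {u. u \<subseteq> {0..<m}}"

definition sh_le :: "nat set \<Rightarrow> nat set \<Rightarrow> bool" where
  "sh_le u v \<longleftrightarrow> finite u \<and> finite v \<and> card u = card v \<and>
     (\<forall>k < card u. sorted_list_of_set u ! k \<le> sorted_list_of_set v ! k)"

definition mono_le :: "nat set \<Rightarrow> nat set \<Rightarrow> bool" where
  "mono_le u v \<longleftrightarrow> (\<exists>vs. vs \<subseteq> v \<and> sh_le u vs)"

definition decreasing :: "nat \<Rightarrow> nat set set \<Rightarrow> bool" where
  "decreasing m I \<longleftrightarrow> I \<subseteq> monomials m \<and> (\<forall>f\<in>I. \<forall>g. mono_le g f \<longrightarrow> g \<in> I)"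

definition Jset :: "nat set set \<Rightarrow> nat set \<Rightarrow> nat \<Rightarrow> nat set" where
  "Jset I f i = {j. j < i \<and> j \<notin> f \<and> insert j (f - {i}) \<in> I}"

text \<open>Action of (B, eps) on a monomial u: the product over i in ind u of
  x_i + sum_{j<i} b_{i,j} x_j + eps_i, as a function of x \<in> F_2^m.\<close>
definition aff_form :: "(nat \<Rightarrow> nat \<Rightarrow> bool) \<Rightarrow> (nat \<Rightarrow> bool) \<Rightarrow> nat \<Rightarrow> (nat \<Rightarrow> bool) \<Rightarrow> bool" where
  "aff_form B eps i x = ((x i \<noteq> odd (card {j. j < i \<and> B i j \<and> x j})) \<noteq> eps i)"

definition act :: "(nat \<Rightarrow> nat \<Rightarrow> bool) \<Rightarrow> (nat \<Rightarrow> bool) \<Rightarrow> nat set \<Rightarrow> ((nat \<Rightarrow> bool) \<Rightarrow> bool)" where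
  "act B eps u = (\<lambda>x. \<forall>i\<in>u. aff_form B eps i x)"

definition gf2_rows_indep :: "(nat \<Rightarrow> nat \<Rightarrow> bool) \<Rightarrow> nat set \<Rightarrow> nat set \<Rightarrow> bool" where
  "gf2_rows_indep B C S \<longleftrightarrow>
     (\<forall>T. T \<subseteq> S \<longrightarrow> T \<noteq> {} \<longrightarrow> (\<exists>c\<in>C. odd (card {r\<in>T. B r c})))"

definition gf2_rank :: "(nat \<Rightarrow> nat \<Rightarrow> bool) \<Rightarrow> nat set \<Rightarrow> nat set \<Rightarrow> nat" where
  "gf2_rank B R C = Max {card S | S. S \<subseteq> R \<and> gf2_rows_indep B C S}"

text \<open>Elements of LTA(m,2): B is binary lower unitriangular m x m, stored by its
  strictly lower part (b_{i,j} for j < i < m), eps \<in> F_2^m.\<close>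
definition LTA :: "nat \<Rightarrow> ((nat \<Rightarrow> nat \<Rightarrow> bool) \<times> (nat \<Rightarrow> bool)) set" where
  "LTA m = {(B, eps). (\<forall>i j. B i j \<longrightarrow> j < i \<and> i < m) \<and> (\<forall>i. eps i \<longrightarrow> i < m)}"

definition LTA_f :: "nat \<Rightarrow> nat set \<Rightarrow> ((nat \<Rightarrow> nat \<Rightarrow> bool) \<times> (nat \<Rightarrow> bool)) set" where
  "LTA_f m f = {(B, eps) \<in> LTA m. (\<forall>i. i \<notin> f \<longrightarrow> \<not> eps i) \<and>
       (\<forall>i j. (i \<notin> f \<or> j \<in> f) \<longrightarrow> \<not> B i j)}"

definition LTA_orbit :: "nat \<Rightarrow> nat set set \<Rightarrow> nat set \<Rightarrow> nat set \<Rightarrow> ((nat \<Rightarrow> bool) \<Rightarrow> bool) set" where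
  "LTA_orbit m I f h =
     {act B eps (f - h) | B eps. (B, eps) \<in> LTA_f m f \<and>
        (\<forall>i\<in>f - h. \<forall>j<i. j \<notin> Jset I f i \<longrightarrow> \<not> B i j) \<and>
        gf2_rank B (f - h) (if f - h = {} then {} else Jset I f (Max (f - h))) = card (f - h)}"

end

theory Submission
  imports Defs
begin


definition xs :: "(nat \<Rightarrow> nat \<Rightarrow> bool) \<Rightarrow> nat set \<Rightarrow> nat set" where
  "xs B T = {c. odd (card {r\<in>T. B r c})}"

lemma parity_diff:
  assumes "finite A" "finite B"
  shows "odd (card ((A - B) \<union> (B - A))) \<longleftrightarrow> (odd (card A) \<noteq> odd (card B))"
proof -
  have 1: "card ((A - B) \<union> (B - A)) = card (A - B) + card (B - A)"
    by (rule card_Un_disjoint) (use assms in auto)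
  have 2: "card A = card (A - B) + card (A \<inter> B)"
    using assms by (metis Int_commute add.commute card_Diff_subset_Int card_Int_Diff finite_Int)
  have 3: "card B = card (B - A) + card (A \<inter> B)"
    using assms by (metis Int_commute add.commute card_Int_Diff)
  show ?thesis using 1 2 3 by presburger
qed

lemma indep_xs: "gf2_rows_indep B C S \<longleftrightarrow> (\<forall>T\<subseteq>S. T \<noteq> {} \<longrightarrow> xs B T \<inter> C \<noteq> {})"
  unfolding gf2_rows_indep_def xs_def by auto

lemma xs_symdiff:
  assumes "finite T1" "finite T2"
  shows "xs B ((T1 - T2) \<union> (T2 - T1)) = {c. (c \<in> xs B T1) \<noteq> (c \<in> xs B T2)}"
proof (rule set_eqI)
  fix c
  have eq: "{r\<in>(T1 - T2) \<union> (T2 - T1). B r c} =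
      ({r\<in>T1. B r c} - {r\<in>T2. B r c}) \<union> ({r\<in>T2. B r c} - {r\<in>T1. B r c})" by auto
  have "odd (card {r\<in>(T1 - T2) \<union> (T2 - T1). B r c}) \<longleftrightarrow> (odd (card {r\<in>T1. B r c}) \<noteq> odd (card {r\<in>T2. B r c}))"
    unfolding eq by (rule parity_diff) (use assms in auto)
  then show "c \<in> xs B ((T1 - T2) \<union> (T2 - T1)) \<longleftrightarrow> c \<in> {c. (c \<in> xs B T1) \<noteq> (c \<in> xs B T2)}"
    unfolding xs_def by simp
qed

lemma xs_insert:
  assumes "finite T" "i \<notin> T"
  shows "xs (B(i := \<lambda>j. j \<in> w)) (insert i T) = {c. (c \<in> w) \<noteq> (c \<in> xs B T)}"
proof (rule set_eqI)
  fix c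
  let ?B' = "B(i := \<lambda>j. j \<in> w)"
  have fin: "finite {r\<in>T. B r c}" using assms(1) by simp
  have nin: "i \<notin> {r\<in>T. B r c}" using assms(2) by simp
  show "c \<in> xs ?B' (insert i T) \<longleftrightarrow> c \<in> {c. (c \<in> w) \<noteq> (c \<in> xs B T)}"
  proof (cases "c \<in> w")
    case True
    then have "{r\<in>insert i T. ?B' r c} = insert i {r\<in>T. B r c}" using assms(2) by auto
    then show ?thesis using True fin nin unfolding xs_def by simp
  next
    case False
    then have "{r\<in>insert i T. ?B' r c} = {r\<in>T. B r c}" using assms(2) by auto
    then show ?thesis using False unfolding xs_def by simp
  qed
qed

lemma xs_sub:
  assumes "T \<subseteq> S" "\<forall>r\<in>S. \<forall>c. B r c \<longrightarrow> c \<in> Jn"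
  shows "xs B T \<subseteq> Jn"
proof
  fix c assume "c \<in> xs B T"
  then have "{r\<in>T. B r c} \<noteq> {}" unfolding xs_def by (intro notI) simp
  then show "c \<in> Jn" using assms by auto
qed

lemma xs_inj:
  assumes "finite S" "gf2_rows_indep B C S"
  shows "inj_on (xs B) (Pow S)"
proof
  fix T1 T2 assume T: "T1 \<in> Pow S" "T2 \<in> Pow S" "xs B T1 = xs B T2"
  have f: "finite T1" "finite T2" using T assms finite_subset by auto
  show "T1 = T2"
  proof (rule ccontr)
    assume "T1 \<noteq> T2"
    then have "(T1 - T2) \<union> (T2 - T1) \<noteq> {}" by auto
    moreover have "(T1 - T2) \<union> (T2 - T1) \<subseteq> S" using T by auto
    ultimately have "xs B ((T1 - T2) \<union> (T2 - T1)) \<inter> C \<noteq> {}"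
      using assms(2) unfolding indep_xs by blast
    then show False using xs_symdiff[OF f, of B] T(3) by auto
  qed
qed

lemma indep_cong_mono:
  assumes "gf2_rows_indep B C S" "S' \<subseteq> S" "\<forall>r\<in>S'. B' r = B r"
  shows "gf2_rows_indep B' C S'"
  unfolding gf2_rows_indep_def
proof (intro allI impI)
  fix T assume T: "T \<subseteq> S'" "T \<noteq> {}"
  have "\<And>c. {r\<in>T. B' r c} = {r\<in>T. B r c}" using T assms(3) by auto
  then show "\<exists>c\<in>C. odd (card {r \<in> T. B' r c})"
    using assms(1) T assms(2) unfolding gf2_rows_indep_def by auto
qed

lemma count_ext:
  assumes fS: "finite S" and fJ: "finite Jn" and iS: "i \<notin> S"
    and ind: "gf2_rows_indep B C S" and sup: "\<forall>r\<in>S. \<forall>c. B r c \<longrightarrow> c \<in> Jn" and JC: "Jn \<subseteq> C"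
  shows "card {w. w \<subseteq> Jn \<and> gf2_rows_indep (B(i := \<lambda>j. j \<in> w)) C (insert i S)} = 2 ^ card Jn - 2 ^ card S"
proof -
  let ?sp = "xs B ` Pow S"
  have sp_sub: "?sp \<subseteq> Pow Jn" using xs_sub sup by blast
  have card_sp: "card ?sp = 2 ^ card S"
    using card_image[OF xs_inj[OF fS ind]] card_Pow fS by simp
  have eq: "{w. w \<subseteq> Jn \<and> gf2_rows_indep (B(i := \<lambda>j. j \<in> w)) C (insert i S)} = Pow Jn - ?sp"
  proof (intro set_eqI iffI)
    fix w assume "w \<in> {w. w \<subseteq> Jn \<and> gf2_rows_indep (B(i := \<lambda>j. j \<in> w)) C (insert i S)}"
    then have wJ: "w \<subseteq> Jn" and ind': "gf2_rows_indep (B(i := \<lambda>j. j \<in> w)) C (insert i S)" by auto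
    show "w \<in> Pow Jn - ?sp"
    proof (rule ccontr)
      assume "w \<notin> Pow Jn - ?sp"
      with wJ obtain T where T: "T \<subseteq> S" "w = xs B T" by auto
      have fT: "finite T" using T fS finite_subset by blast
      have iT: "i \<notin> T" using T iS by auto
      have "xs (B(i := \<lambda>j. j \<in> w)) (insert i T) = {}" using xs_insert[OF fT iT] T(2) by auto
      moreover have "insert i T \<subseteq> insert i S" using T by auto
      ultimately show False using ind' unfolding indep_xs by blast
    qed
  next
    fix w assume w: "w \<in> Pow Jn - ?sp"
    have wJ: "w \<subseteq> Jn" using w by auto
    have "gf2_rows_indep (B(i := \<lambda>j. j \<in> w)) C (insert i S)"
      unfolding indep_xs
    proof (intro allI impI)
      fix T assume T: "T \<subseteq> insert i S" "T \<noteq> {}"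
      show "xs (B(i := \<lambda>j. j \<in> w)) T \<inter> C \<noteq> {}"
      proof (cases "i \<in> T")
        case False
        then have TS: "T \<subseteq> S" using T by auto
        have "xs (B(i := \<lambda>j. j \<in> w)) T = xs B T" unfolding xs_def
        proof -
          have "\<And>c. {r\<in>T. (B(i := \<lambda>j. j \<in> w)) r c} = {r\<in>T. B r c}" using False by auto
          then show "{c. odd (card {r\<in>T. (B(i := \<lambda>j. j \<in> w)) r c})} = {c. odd (card {r\<in>T. B r c})}"
            by simp
        qed
        then show ?thesis using ind TS T(2) unfolding indep_xs by auto
      next
        case True
        define T' where "T' = T - {i}"
        have T'S: "T' \<subseteq> S" using T by (auto simp: T'_def)
        have fT': "finite T'" using T'S fS finite_subset by blast
        have TT: "T = insert i T'" "i \<notin> T'" using True by (auto simp: T'_def)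
        have xeq: "xs (B(i := \<lambda>j. j \<in> w)) T = {c. (c \<in> w) \<noteq> (c \<in> xs B T')}"
          using xs_insert[OF fT' TT(2)] TT(1) by simp
        have xJ: "xs B T' \<subseteq> Jn" using xs_sub T'S sup by blast
        show ?thesis
        proof
          assume "xs (B(i := \<lambda>j. j \<in> w)) T \<inter> C = {}"
          then have "w = xs B T'" using xeq wJ xJ JC by blast
          then show False using w T'S by auto
        qed
      qed
    qed
    then show "w \<in> {w. w \<subseteq> Jn \<and> gf2_rows_indep (B(i := \<lambda>j. j \<in> w)) C (insert i S)}"
      using wJ by simp
  qed
  have fsp: "finite ?sp" using fS by simp
  show ?thesis unfolding eq using card_Diff_subset[OF fsp sp_sub] card_sp by (simp add: card_Pow fJ)
qed



lemma count_le_nth: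
  assumes "finite U" "k < card U" "t < sorted_list_of_set U ! k"
  shows "card {x\<in>U. x \<le> t} \<le> k"
proof -
  let ?L = "sorted_list_of_set U"
  have "{x\<in>U. x \<le> t} \<subseteq> (\<lambda>p. ?L ! p) ` {..<k}"
  proof
    fix x assume x: "x \<in> {x\<in>U. x \<le> t}"
    then have "x \<in> set ?L" using assms(1) by simp
    then obtain p where p: "p < length ?L" "?L ! p = x" by (metis in_set_conv_nth)
    have "p < k"
    proof (rule ccontr)
      assume "\<not> p < k"
      then have "k \<le> p" by simp
      moreover have "sorted ?L" by simp
      ultimately have "?L ! k \<le> ?L ! p" using p(1) sorted_nth_mono by blast
      then show False using x p(2) assms(3) by auto
    qed
    then show "x \<in> (\<lambda>p. ?L ! p) ` {..<k}" using p(2) by blast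
  qed
  then have "card {x\<in>U. x \<le> t} \<le> card ((\<lambda>p. ?L ! p) ` {..<k})" by (intro card_mono) auto
  also have "\<dots> \<le> k" using card_image_le[of "{..<k}"] by simp
  finally show ?thesis .
qed

lemma nth_count:
  assumes "finite V" "k < card V"
  shows "k + 1 \<le> card {x\<in>V. x \<le> sorted_list_of_set V ! k}"
proof -
  let ?L = "sorted_list_of_set V"
  have len: "length ?L = card V" by simp
  have sub: "(\<lambda>p. ?L ! p) ` {..k} \<subseteq> {x\<in>V. x \<le> ?L ! k}"
  proof
    fix x assume "x \<in> (\<lambda>p. ?L ! p) ` {..k}"
    then obtain p where p: "p \<le> k" "x = ?L ! p" by auto
    have pl: "p < length ?L" using p assms len by simp
    then have "x \<in> set ?L" using p(2) nth_mem by blast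
    moreover have "sorted ?L" by simp
    moreover have "k < length ?L" using assms len by simp
    ultimately have "x \<in> set ?L" "x \<le> ?L ! k" using p sorted_nth_mono by blast+
    then show "x \<in> {x\<in>V. x \<le> ?L ! k}" using assms(1) by simp
  qed
  have inj: "inj_on (\<lambda>p. ?L ! p) {..k}"
    using assms len by (intro inj_onI) (auto simp: nth_eq_iff_index_eq)
  have "k + 1 = card ((\<lambda>p. ?L ! p) ` {..k})" using card_image[OF inj] by simp
  also have "\<dots> \<le> card {x\<in>V. x \<le> ?L ! k}" using sub assms(1) by (intro card_mono) auto
  finally show ?thesis .
qed

lemma sh_le_from_counts:
  assumes "finite U" "finite V" "card U = card V" "\<forall>t. card {x\<in>V. x \<le> t} \<le> card {x\<in>U. x \<le> t}"
  shows "sh_le U V"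
  unfolding sh_le_def
proof (intro conjI allI impI)
  fix k assume k: "k < card U"
  show "sorted_list_of_set U ! k \<le> sorted_list_of_set V ! k"
  proof (rule ccontr)
    assume "\<not> ?thesis"
    then have a: "card {x\<in>U. x \<le> sorted_list_of_set V ! k} \<le> k"
      using count_le_nth[OF assms(1) k] by simp
    have "k + 1 \<le> card {x\<in>V. x \<le> sorted_list_of_set V ! k}"
      using nth_count[OF assms(2)] k assms(3) by simp
    then show False using a assms(4) by (metis add_le_same_cancel1 le_trans not_one_le_zero)
  qed
qed (use assms in auto)

lemma swap_sh_le:
  assumes "finite A" "a \<in> A" "b \<notin> A" "b \<le> a"
  shows "sh_le (insert b (A - {a})) A"
proof (rule sh_le_from_counts)
  show "finite (insert b (A - {a}))" using assms by simp
  show "finite A" by fact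
  have c1: "card (A - {a}) = card A - 1" using assms by (simp add: card_Diff_singleton)
  have c2: "card A > 0" using assms card_gt_0_iff by blast
  have c3: "card (insert b (A - {a})) = Suc (card (A - {a}))" using assms by (simp add: card_insert_disjoint)
  show "card (insert b (A - {a})) = card A" using c1 c2 c3 by simp
  show "\<forall>t. card {x\<in>A. x \<le> t} \<le> card {x\<in>insert b (A - {a}). x \<le> t}"
  proof
    fix t
    show "card {x\<in>A. x \<le> t} \<le> card {x\<in>insert b (A - {a}). x \<le> t}"
    proof (cases "a \<le> t")
      case True
      then have e: "{x\<in>insert b (A - {a}). x \<le> t} = insert b ({x\<in>A. x \<le> t} - {a})"
        using assms by auto
      have f: "finite {x\<in>A. x \<le> t}" using assms by simp
      have ain: "a \<in> {x\<in>A. x \<le> t}" using True assms by simp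
      have "card ({x\<in>A. x \<le> t} - {a}) = card {x\<in>A. x \<le> t} - 1"
        using ain by (rule card_Diff_singleton)
      moreover have "card {x\<in>A. x \<le> t} > 0"
        using f ain card_gt_0_iff by blast
      moreover have "card (insert b ({x\<in>A. x \<le> t} - {a})) = Suc (card ({x\<in>A. x \<le> t} - {a}))"
        using f assms(3) by (simp add: card_insert_disjoint)
      ultimately show ?thesis unfolding e by simp
    next
      case False
      then have "{x\<in>A. x \<le> t} \<subseteq> {x\<in>insert b (A - {a}). x \<le> t}" by auto
      then show ?thesis using assms(1) by (intro card_mono) auto
    qed
  qed
qed

lemma Jset_mono:
  assumes dec: "decreasing m I" and ii: "i \<le> i'" "i \<in> f" "i' \<in> f" and ff: "finite f"
  shows "Jset I f i \<subseteq> Jset I f i'"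
proof
  fix j assume j: "j \<in> Jset I f i"
  then have j1: "j < i" "j \<notin> f" and g: "insert j (f - {i}) \<in> I" unfolding Jset_def by auto
  show "j \<in> Jset I f i'"
  proof (cases "i = i'")
    case True then show ?thesis using j by simp
  next
    case False
    let ?g = "insert j (f - {i})"
    have u: "insert j (f - {i'}) = insert i (?g - {i'})" using False j1 ii by auto
    have "sh_le (insert i (?g - {i'})) ?g"
      by (rule swap_sh_le) (use False j1 ii ff in auto)
    then have "mono_le (insert j (f - {i'})) ?g" unfolding mono_le_def u by blast
    then have "insert j (f - {i'}) \<in> I" using dec g unfolding decreasing_def by blast
    then show ?thesis using j1 ii unfolding Jset_def by auto
  qed
qed

lemma rank_full:
  assumes "finite R"
  shows "gf2_rank B R C = card R \<longleftrightarrow> gf2_rows_indep B C R"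
proof -
  let ?A = "{card S | S. S \<subseteq> R \<and> gf2_rows_indep B C S}"
  have fA: "finite ?A"
  proof -
    have "?A \<subseteq> card ` Pow R" by auto
    then show ?thesis using assms finite_subset by blast
  qed
  have "gf2_rows_indep B C {}" unfolding gf2_rows_indep_def by auto
  then have neA: "?A \<noteq> {}" by blast
  show ?thesis
  proof
    assume "gf2_rank B R C = card R"
    then have "card R \<in> ?A" using Max_in[OF fA neA] unfolding gf2_rank_def by simp
    then obtain S where S: "S \<subseteq> R" "gf2_rows_indep B C S" "card S = card R" by auto
    then have "S = R" using card_subset_eq assms by blast
    then show "gf2_rows_indep B C R" using S by simp
  next
    assume "gf2_rows_indep B C R"
    then have "card R \<in> ?A" by blast
    moreover have "\<forall>a\<in>?A. a \<le> card R" using assms card_mono by blast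
    ultimately show "gf2_rank B R C = card R" unfolding gf2_rank_def
      by (intro Max_eqI[OF fA]) auto
  qed
qed



definition Mset :: "(nat \<Rightarrow> nat set) \<Rightarrow> nat set \<Rightarrow> nat set \<Rightarrow> (nat \<Rightarrow> nat \<Rightarrow> bool) set" where
  "Mset J C S = {B. (\<forall>i j. B i j \<longrightarrow> i \<in> S \<and> j \<in> J i) \<and> gf2_rows_indep B C S}"

lemma count_mats:
  fixes rs :: "nat list" and J :: "nat \<Rightarrow> nat set" and C :: "nat set"
  assumes dist: "distinct rs"
    and fJ: "\<forall>i\<in>set rs. finite (J i)"
    and nest: "\<forall>k l. k \<le> l \<longrightarrow> l < length rs \<longrightarrow> J (rs!k) \<subseteq> J (rs!l)"
    and JC: "\<forall>i\<in>set rs. J i \<subseteq> C"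
  shows "n \<le> length rs \<Longrightarrow> finite (Mset J C (set (take n rs))) \<and>
     card (Mset J C (set (take n rs))) = (\<Prod>k<n. 2 ^ card (J (rs!k)) - 2 ^ k)"
proof (induction n)
  case 0
  have "Mset J C (set (take 0 rs)) = {\<lambda>i j. False}"
    by (auto simp: Mset_def gf2_rows_indep_def fun_eq_iff)
  then show ?case by simp
next
  case (Suc n)
  then have nl: "n < length rs" by simp
  have IH: "finite (Mset J C (set (take n rs)))"
    "card (Mset J C (set (take n rs))) = (\<Prod>k<n. 2 ^ card (J (rs!k)) - 2 ^ k)"
    using Suc nl by auto
  define i where "i = rs ! n"
  define S where "S = set (take n rs)"
  define Mn where "Mn = Mset J C S"
  have tk: "set (take (Suc n) rs) = insert i S"
    using nl by (simp add: take_Suc_conv_app_nth i_def S_def)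
  have "distinct (take (Suc n) rs)" using dist by simp
  then have iS: "i \<notin> S" using nl by (simp add: take_Suc_conv_app_nth i_def S_def)
  have cS: "card S = n" unfolding S_def using dist nl
    by (simp add: distinct_card)
  have fS: "finite S" unfolding S_def by simp
  have iset: "i \<in> set rs" using nl by (simp add: i_def)
  define W where "W = (\<lambda>B0. {w. w \<subseteq> J i \<and> gf2_rows_indep (B0(i := \<lambda>j. j \<in> w)) C (insert i S)})"
  define g where "g = (\<lambda>(B0 :: nat \<Rightarrow> nat \<Rightarrow> bool, w :: nat set). B0(i := \<lambda>j. j \<in> w))"
  have supS: "\<forall>r\<in>S. J r \<subseteq> J i"
  proof
    fix r assume "r \<in> S"
    then obtain p where p: "p < n" "r = rs ! p" unfolding S_def using nl
      by (auto simp: in_set_conv_nth)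
    then show "J r \<subseteq> J i" using nest nl unfolding i_def by simp
  qed
  have cW: "\<And>B0. B0 \<in> Mn \<Longrightarrow> card (W B0) = 2 ^ card (J i) - 2 ^ n"
  proof -
    fix B0 assume B0: "B0 \<in> Mn"
    have ind: "gf2_rows_indep B0 C S" using B0 by (simp add: Mn_def Mset_def)
    have sup: "\<forall>r\<in>S. \<forall>c. B0 r c \<longrightarrow> c \<in> J i" using B0 supS by (auto simp: Mn_def Mset_def)
    show "card (W B0) = 2 ^ card (J i) - 2 ^ n"
      unfolding W_def using count_ext[OF fS _ iS ind sup] fJ JC iset cS by simp
  qed
  have fW: "\<And>B0. finite (W B0)"
  proof -
    fix B0 have "W B0 \<subseteq> Pow (J i)" by (auto simp: W_def)
    then show "finite (W B0)" using fJ iset finite_subset by blast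
  qed
  have img: "Mset J C (insert i S) = g ` Sigma Mn W"
  proof (intro set_eqI iffI)
    fix B assume B: "B \<in> Mset J C (insert i S)"
    define B0 where "B0 = B(i := \<lambda>j. False)"
    define w where "w = {j. B i j}"
    have Beq: "B = B0(i := \<lambda>j. j \<in> w)" by (auto simp: B0_def w_def fun_eq_iff)
    have indB: "gf2_rows_indep B C (insert i S)" using B by (simp add: Mset_def)
    have "B0 \<in> Mn"
      unfolding Mn_def Mset_def
    proof (rule CollectI, rule conjI)
      show "\<forall>r j. B0 r j \<longrightarrow> r \<in> S \<and> j \<in> J r" using B by (auto simp: B0_def Mset_def)
    next
      show "gf2_rows_indep B0 C S"
        by (rule indep_cong_mono[OF indB]) (use iS in \<open>auto simp: B0_def\<close>)
    qed
    moreover have "w \<in> W B0"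
      unfolding W_def using B Beq[symmetric] indB by (auto simp: w_def Mset_def)
    ultimately show "B \<in> g ` Sigma Mn W"
      unfolding g_def using Beq by (intro image_eqI[where x="(B0, w)"]) auto
  next
    fix B assume "B \<in> g ` Sigma Mn W"
    then obtain B0 w where B0: "B0 \<in> Mn" "w \<in> W B0" "B = B0(i := \<lambda>j. j \<in> w)"
      unfolding g_def by auto
    show "B \<in> Mset J C (insert i S)"
      unfolding Mset_def
    proof (rule CollectI, rule conjI)
      show "\<forall>r j. B r j \<longrightarrow> r \<in> insert i S \<and> j \<in> J r"
        using B0 by (auto simp: Mn_def Mset_def W_def)
    next
      show "gf2_rows_indep B C (insert i S)" using B0 by (simp add: W_def)
    qed
  qed
  have inj: "inj_on g (Sigma Mn W)"
  proof (rule inj_onI)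
    fix p q assume p: "p \<in> Sigma Mn W" and q: "q \<in> Sigma Mn W" and e: "g p = g q"
    obtain B0 w where pp: "p = (B0, w)" by (cases p)
    obtain B0' w' where qq: "q = (B0', w')" by (cases q)
    have z: "\<And>j. \<not> B0 i j" "\<And>j. \<not> B0' i j"
      using p q iS by (auto simp: pp qq Mn_def Mset_def)
    have e2: "B0(i := \<lambda>j. j \<in> w) = B0'(i := \<lambda>j. j \<in> w')" using e by (simp add: g_def pp qq)
    have "B0 = B0'"
    proof (intro ext)
      fix r j show "B0 r j = B0' r j"
      proof (cases "r = i")
        case True then show ?thesis using z by simp
      next
        case False then show ?thesis using fun_cong[OF fun_cong[OF e2, of r], of j] by simp
      qed
    qed
    moreover have "w = w'" using fun_cong[OF e2, of i] by (auto simp: fun_eq_iff)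
    ultimately show "p = q" by (simp add: pp qq)
  qed
  have fMn: "finite Mn" using IH by (simp add: Mn_def S_def)
  have "card (Mset J C (insert i S)) = card (Sigma Mn W)"
    unfolding img by (rule card_image[OF inj])
  also have "\<dots> = (\<Sum>B0\<in>Mn. card (W B0))" using fMn fW by simp
  also have "\<dots> = card Mn * (2 ^ card (J i) - 2 ^ n)" using cW by simp
  finally have cc: "card (Mset J C (insert i S)) = card Mn * (2 ^ card (J i) - 2 ^ n)" .
  have fin: "finite (Mset J C (insert i S))" unfolding img using fMn fW by simp
  show ?case unfolding tk using cc fin IH by (simp add: Mn_def S_def i_def)
qed

lemma act_inj:
  assumes sB: "\<forall>i j. B i j \<longrightarrow> i \<in> R \<and> j \<notin> R \<and> j < i"
    and sB': "\<forall>i j. B' i j \<longrightarrow> i \<in> R \<and> j \<notin> R \<and> j < i"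
    and se: "\<forall>i. e i \<longrightarrow> i \<in> R" and se': "\<forall>i. e' i \<longrightarrow> i \<in> R"
    and eq: "act B e R = act B' e' R"
  shows "B = B' \<and> e = e'"
proof -
  define phi where "phi = (\<lambda>(B::nat\<Rightarrow>nat\<Rightarrow>bool) (e::nat\<Rightarrow>bool) k (x::nat\<Rightarrow>bool).
      (odd (card {j. j < k \<and> B k j \<and> x j}) = e k))"
  have aff: "\<And>B e k x. aff_form B e k x \<longleftrightarrow> x k = phi B e k x"
    unfolding aff_form_def phi_def by auto
  have loc: "\<And>B e k x y. (\<forall>i j. B i j \<longrightarrow> j \<notin> R) \<Longrightarrow> (\<forall>t. t \<notin> R \<longrightarrow> x t = y t)
      \<Longrightarrow> phi B e k x = phi B e k y"
  proof -
    fix B :: "nat\<Rightarrow>nat\<Rightarrow>bool" and e k and x y :: "nat \<Rightarrow> bool"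
    assume a: "\<forall>i j. B i j \<longrightarrow> j \<notin> R" "\<forall>t. t \<notin> R \<longrightarrow> x t = y t"
    have "{j. j < k \<and> B k j \<and> x j} = {j. j < k \<and> B k j \<and> y j}" using a by auto
    then show "phi B e k x = phi B e k y" unfolding phi_def by simp
  qed
  have sB1: "\<forall>i j. B i j \<longrightarrow> j \<notin> R" using sB by blast
  have sB1': "\<forall>i j. B' i j \<longrightarrow> j \<notin> R" using sB' by blast
  have key: "\<And>k x0. k \<in> R \<Longrightarrow> phi B e k x0 = phi B' e' k x0"
  proof -
    fix k x0 assume k: "k \<in> R"
    define x where "x = (\<lambda>t. if t \<in> R then phi B e t x0 else x0 t)"
    have xx: "\<forall>t. t \<notin> R \<longrightarrow> x t = x0 t" by (simp add: x_def)
    have "act B e R x" unfolding act_def aff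
    proof
      fix t assume t: "t \<in> R"
      have "x t = phi B e t x0" using t by (simp add: x_def)
      also have "\<dots> = phi B e t x" using loc[OF sB1 xx] by simp
      finally show "x t = phi B e t x" .
    qed
    then have "act B' e' R x" using eq by simp
    then have "x k = phi B' e' k x" using k unfolding act_def aff by blast
    also have "\<dots> = phi B' e' k x0" using loc[OF sB1' xx] by simp
    finally show "phi B e k x0 = phi B' e' k x0" using k by (simp add: x_def)
  qed
  have ee: "e = e'"
  proof
    fix i show "e i = e' i"
    proof (cases "i \<in> R")
      case True
      from key[OF True, of "\<lambda>_. False"] show ?thesis by (simp add: phi_def)
    next
      case False then show ?thesis using se se' by blast
    qed
  qed
  have "B = B'"
  proof (intro ext)
    fix k j show "B k j = B' k j"
    proof (cases "k \<in> R")
      case True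
      have s: "\<And>B::nat\<Rightarrow>nat\<Rightarrow>bool. {j'. j' < k \<and> B k j' \<and> j' = j} = (if j < k \<and> B k j then {j} else {})"
        by auto
      from key[OF True, of "\<lambda>t. t = j"] have "(j < k \<and> B k j) = (j < k \<and> B' k j)"
        unfolding phi_def s using ee by (auto split: if_splits)
      then show ?thesis using sB sB' by blast
    next
      case False then show ?thesis using sB sB' by blast
    qed
  qed
  then show ?thesis using ee by simp
qed



lemma act_cong:
  assumes "\<And>i. i \<in> R \<Longrightarrow> B i = B' i" "\<And>i. i \<in> R \<Longrightarrow> e i = e' i"
  shows "act B e R = act B' e' R"
  unfolding act_def aff_form_def using assms by (intro ext ball_cong) auto

theorem proposition6:
  fixes m :: nat and I :: "nat set set" and f h :: "nat set"
  assumes "decreasing m I"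
    and "f \<in> monomials m" and "f \<notin> I"
    and "h \<subseteq> f"
    and "\<forall>j\<in>{1..card (f - h)}. card (Jset I f (sorted_list_of_set (f - h) ! (j - 1))) > j - 1"
  shows "card (LTA_orbit m I f h) =
    2 ^ card (f - h) *
    (\<Prod>j = 1..card (f - h). (2 ^ card (Jset I f (sorted_list_of_set (f - h) ! (j - 1))) - 2 ^ (j - 1)))"
proof -
  define R where "R = f - h"
  have fsub: "f \<subseteq> {0..<m}" using assms(2) unfolding monomials_def by simp
  have ff: "finite f" using fsub finite_subset by blast
  have fR: "finite R" using ff R_def by simp
  have Rf: "R \<subseteq> f" using R_def by auto
  define rs where "rs = sorted_list_of_set R"
  have rs: "distinct rs" "set rs = R" "length rs = card R" "sorted rs" using fR by (simp_all add: rs_def)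
  define C where "C = (if R = {} then {} else Jset I f (Max R))"
  have fJ: "\<forall>i\<in>set rs. finite (Jset I f i)"
  proof
    fix i have "Jset I f i \<subseteq> {..<i}" by (auto simp: Jset_def)
    then show "finite (Jset I f i)" using finite_subset by blast
  qed
  have nest: "\<forall>k l. k \<le> l \<longrightarrow> l < length rs \<longrightarrow> Jset I f (rs!k) \<subseteq> Jset I f (rs!l)"
  proof (intro allI impI)
    fix k l assume kl: "k \<le> l" "l < length rs"
    have "rs ! k \<le> rs ! l" using sorted_nth_mono[OF rs(4) kl] .
    moreover have "rs ! k \<in> f" "rs ! l \<in> f" using kl rs(2) Rf nth_mem by (metis le_less_trans subsetD)+
    ultimately show "Jset I f (rs!k) \<subseteq> Jset I f (rs!l)" using Jset_mono[OF assms(1) _ _ _ ff] by blast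
  qed
  have JC: "\<forall>i\<in>set rs. Jset I f i \<subseteq> C"
  proof
    fix i assume "i \<in> set rs"
    then have i: "i \<in> R" using rs by simp
    then have ne: "R \<noteq> {}" by auto
    have "i \<le> Max R" "Max R \<in> R" using i fR ne by auto
    then show "Jset I f i \<subseteq> C" unfolding C_def using ne Jset_mono[OF assms(1) _ _ _ ff] i Rf by auto
  qed
  have cm: "finite (Mset (Jset I f) C R) \<and> card (Mset (Jset I f) C R) = (\<Prod>k<card R. 2 ^ card (Jset I f (rs!k)) - 2 ^ k)"
    using count_mats[OF rs(1) fJ nest JC, of "length rs"] rs by simp
  define Eps where "Eps = {e :: nat \<Rightarrow> bool. \<forall>i. e i \<longrightarrow> i \<in> R}"
  have cE: "card Eps = 2 ^ card R"
  proof -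
    have "Eps = (\<lambda>A i. i \<in> A) ` Pow R"
    proof (intro set_eqI iffI)
      fix e assume "e \<in> Eps"
      then show "e \<in> (\<lambda>A i. i \<in> A) ` Pow R"
        by (intro image_eqI[where x="{i. e i}"]) (auto simp: Eps_def)
    qed (auto simp: Eps_def)
    moreover have "inj_on (\<lambda>A i. i \<in> A) (Pow R)"
      by (rule inj_onI) (metis mem_Collect_eq Collect_mem_eq)
    ultimately show ?thesis using card_image card_Pow fR by metis
  qed
  define Mats where "Mats = Mset (Jset I f) C R"
  define F where "F = (\<lambda>(B, e). act B e R)"
  have orbit: "LTA_orbit m I f h = F ` (Mats \<times> Eps)"
  proof (intro set_eqI iffI)
    fix x assume "x \<in> LTA_orbit m I f h"
    then obtain B eps where x: "x = act B eps R" and L: "(B, eps) \<in> LTA_f m f"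
      and c1: "\<forall>i\<in>R. \<forall>j<i. j \<notin> Jset I f i \<longrightarrow> \<not> B i j"
      and rk: "gf2_rank B R C = card R"
      unfolding LTA_orbit_def R_def[symmetric] C_def[symmetric] by blast
    define B' where "B' = (\<lambda>i j. i \<in> R \<and> B i j)"
    define e' where "e' = (\<lambda>i. i \<in> R \<and> eps i)"
    have "act B eps R = act B' e' R" by (rule act_cong) (auto simp: B'_def e'_def)
    moreover have "B' \<in> Mats"
      unfolding Mats_def Mset_def
    proof (rule CollectI, rule conjI)
      show "\<forall>i j. B' i j \<longrightarrow> i \<in> R \<and> j \<in> Jset I f i"
        using L c1 by (auto simp: B'_def LTA_f_def LTA_def)
      have "gf2_rows_indep B C R" using rk rank_full fR by blast
      then show "gf2_rows_indep B' C R"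
        by (rule indep_cong_mono) (auto simp: B'_def)
    qed
    moreover have "e' \<in> Eps" by (simp add: Eps_def e'_def)
    ultimately show "x \<in> F ` (Mats \<times> Eps)" unfolding x F_def
      by (intro image_eqI[where x="(B', e')"]) auto
  next
    fix x assume "x \<in> F ` (Mats \<times> Eps)"
    then obtain B e where x: "x = act B e R" and B: "B \<in> Mats" and e: "e \<in> Eps"
      unfolding F_def by auto
    have sup: "\<forall>i j. B i j \<longrightarrow> i \<in> R \<and> j \<in> Jset I f i" using B by (simp add: Mats_def Mset_def)
    have ind: "gf2_rows_indep B C R" using B by (simp add: Mats_def Mset_def)
    have L: "(B, e) \<in> LTA_f m f"
      using sup e Rf fsub unfolding LTA_f_def LTA_def Eps_def Jset_def by fastforce
    have c1: "\<forall>i\<in>R. \<forall>j<i. j \<notin> Jset I f i \<longrightarrow> \<not> B i j" using sup by blast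
    have rk: "gf2_rank B R C = card R" using ind rank_full fR by blast
    show "x \<in> LTA_orbit m I f h"
      unfolding LTA_orbit_def R_def[symmetric] C_def[symmetric] x using L c1 rk by blast
  qed
  have inj: "inj_on F (Mats \<times> Eps)"
  proof (rule inj_onI)
    fix p q assume p: "p \<in> Mats \<times> Eps" and q: "q \<in> Mats \<times> Eps" and e: "F p = F q"
    obtain B e where pp: "p = (B, e)" by (cases p)
    obtain B' e' where qq: "q = (B', e')" by (cases q)
    have s: "\<And>B. B \<in> Mats \<Longrightarrow> \<forall>i j. B i j \<longrightarrow> i \<in> R \<and> j \<notin> R \<and> j < i"
      using Rf by (auto simp: Mats_def Mset_def Jset_def)
    show "p = q" using act_inj[OF s s, of B B' e e'] p q e
      by (auto simp: pp qq F_def Eps_def)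
  qed
  have "card (LTA_orbit m I f h) = card Mats * card Eps"
    unfolding orbit card_image[OF inj] card_cartesian_product ..
  also have "\<dots> = 2 ^ card R * (\<Prod>k<card R. 2 ^ card (Jset I f (rs!k)) - 2 ^ k)"
    using cm cE by (simp add: Mats_def)
  also have "(\<Prod>k<card R. 2 ^ card (Jset I f (rs!k)) - 2 ^ k) =
     (\<Prod>j = 1..card R. (2 ^ card (Jset I f (rs ! (j - 1))) - 2 ^ (j - 1)))"
    by (simp add: prod.atLeast1_atMost_eq)
  finally show ?thesis unfolding R_def rs_def .
qed


end
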